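(* Let $p$ be a prime, let $G$ be a cyclic group of order $p$, and let $S$ be an unsplittable minimal zero-sum sequence over $G$. Let $g\in G$, let $x\in[2,p-1]$ be an integer and $k\ge 3$ an integer, and suppose $T=g^k(xg)^2$ is a subsequence of $S$. Then $|\Sigma(T)|\ge 2|T|$. Moreover, unless $T=g^k\big(\frac{p+3}{2}g\big)^2$, one has $|\Sigma(T)|\ge 2|T|+1$.
   Context: A sequence over $G$ is a finite unordered list of elements of $G$ with repetition allowed, written multiplicatively; $g^k$ denotes $k$ copies of $g$, $xg$ is the $x$-fold multiple of $g$, $|T|$ is the length, $\sigma(T)$ the sum of terms, and $\operatorname{supp}(T)$ the set of elements occurring. $T$ is a subsequence of $S$ if each element occurs in $T$ at most as often as in $S$. $\Sigma(T)$ is the set of sums $\sigma(U)$ over all subsequences $U$ of $T$ with $|U|\ge 1$. $S$ is a minimal zero-sum sequence if $\sigma(S)=0$ and no subsequence $U$ with $1\le|U|<|S|$ has $\sigma(U)=0$. A minimal zero-sum sequence $S$ is unsplittable if there do not exist $h\in\operatorname{supp}(S)$ and $y,z\in G$ with $y+z=h$ such that the sequence obtained from $S$ by replacing one copy of $h$ with the two terms $y,z$ is again a minimal zero-sum sequence. *)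

theory Defs
  imports Main "HOL-Library.Multiset" "HOL-Computational_Algebra.Primes"
begin

text \<open>The cyclic group of order p is modelled as Z/pZ, with elements the
  integers 0..p-1 and addition modulo p. A sequence over G is a multiset of
  such integers.\<close>

definition grp :: "int \<Rightarrow> int set" where
  "grp p = {0..<p}"

definition seq_over :: "int \<Rightarrow> int multiset \<Rightarrow> bool" where
  "seq_over p S \<longleftrightarrow> set_mset S \<subseteq> grp p"

definition sigma :: "int \<Rightarrow> int multiset \<Rightarrow> int" where
  "sigma p T = (\<Sum>\<^sub># T) mod p"

definition Sigma_set :: "int \<Rightarrow> int multiset \<Rightarrow> int set" where
  "Sigma_set p T = {sigma p U | U. U \<subseteq># T \<and> U \<noteq> {#}}"

definition min_zero_sum :: "int \<Rightarrow> int multiset \<Rightarrow> bool" where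
  "min_zero_sum p S \<longleftrightarrow> seq_over p S \<and> S \<noteq> {#} \<and> sigma p S = 0 \<and>
     (\<forall>U. U \<subseteq># S \<and> 1 \<le> size U \<and> size U < size S \<longrightarrow> sigma p U \<noteq> 0)"

definition unsplittable :: "int \<Rightarrow> int multiset \<Rightarrow> bool" where
  "unsplittable p S \<longleftrightarrow> min_zero_sum p S \<and>
     \<not> (\<exists>h \<in> set_mset S. \<exists>y \<in> grp p. \<exists>z \<in> grp p. (y + z) mod p = h \<and>
          min_zero_sum p (S - {#h#} + {#y, z#}))"

end

theory Submission
  imports Defs
begin
lemma msub_two: "R \<subseteq># {#y,z#} \<Longrightarrow> R = {#} \<or> R = {#y#} \<or> R = {#z#} \<or> R = {#y,z#}"
proof -
  assume a: "R \<subseteq># {#y,z#}"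
  have one: "Q = {#} \<or> Q = {#z#}" if "Q \<subseteq># {#z#}" for Q
    using nonempty_subseteq_mset_eq_single[OF _ that] by blast
  show ?thesis
  proof (cases "y \<in># R")
    case True
    then obtain R' where R: "R = add_mset y R'" by (meson multi_member_split)
    with a have "R' \<subseteq># {#z#}" by (simp add: insert_subset_eq_iff)
    then show ?thesis using R one by blast
  next
    case False
    have "R \<subseteq># {#z#}" unfolding subseteq_mset_def
    proof
      fix b
      have c: "count R b \<le> count {#y,z#} b" using a by (metis subseteq_mset_def)
      show "count R b \<le> count {#z#} b"
      proof (cases "b = y")
        case True
        then have "count R b = 0" using False by (simp add: count_eq_zero_iff)
        then show ?thesis by simp
      next
        case False
        then show ?thesis using c by simp
      qed
    qed
    then show ?thesis using one by blast
  qed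
qed
lemma msub_rep2:
  assumes "U \<subseteq># replicate_mset k g + replicate_mset m X" "g \<noteq> X"
  shows "U = replicate_mset (count U g) g + replicate_mset (count U X) X \<and> count U g \<le> k \<and> count U X \<le> m"
proof -
  have c: "count U a \<le> count (replicate_mset k g + replicate_mset m X) a" for a
    using assms(1) by (metis subseteq_mset_def)
  have "count U g \<le> k" using c[of g] assms(2) by simp
  moreover have "count U X \<le> m" using c[of X] assms(2) by simp
  moreover have "U = replicate_mset (count U g) g + replicate_mset (count U X) X"
  proof (rule multiset_eqI)
    fix a
    show "count U a = count (replicate_mset (count U g) g + replicate_mset (count U X) X) a"
    proof (cases "a = g \<or> a = X")
      case True then show ?thesis using assms(2) by auto
    next
      case False then show ?thesis using c[of a] by simp
    qed
  qed
  ultimately show ?thesis by blast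
qed
lemma msub_split: "U \<subseteq># A + B \<Longrightarrow> \<exists>U1 U2. U = U1 + U2 \<and> U1 \<subseteq># A \<and> U2 \<subseteq># B"
  apply (rule exI[of _ "U \<inter># A"], rule exI[of _ "U - (U \<inter># A)"])
  apply (auto simp: subseteq_mset_def multiset_eq_iff)
  by (metis le_diff_conv add.commute)

lemma min_sub:
  assumes "min_zero_sum p S" "U \<subseteq># S" "U \<noteq> {#}" "p dvd sum_mset U"
  shows "U = S"
proof (rule ccontr)
  assume "U \<noteq> S"
  then have "U \<subset># S" using assms(2) by (simp add: subset_mset.less_le)
  then have "size U < size S" by (rule mset_subset_size)
  moreover have "1 \<le> size U" using assms(3) by (simp add: Suc_le_eq nonempty_has_size)
  moreover have "sigma p U = 0" using assms(4) unfolding sigma_def by simp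
  ultimately show False using assms(1,2) unfolding min_zero_sum_def by blast
qed

lemma cov:
  assumes "unsplittable p S" "h \<in># S" "p > 0"
  shows "\<exists>U. U \<subseteq># S - {#h#} \<and> p dvd (sum_mset U - c)"
proof (rule ccontr)
  assume nc: "\<not> ?thesis"
  define V where "V = S - {#h#}"
  have mz: "min_zero_sum p S" using assms(1) unfolding unsplittable_def by blast
  have SV: "S = add_mset h V" using assms(2) V_def by simp
  have Ssum: "p dvd sum_mset S" using mz unfolding min_zero_sum_def sigma_def by (simp add: dvd_eq_mod_eq_0)
  have hg: "h \<in> grp p" using mz assms(2) unfolding min_zero_sum_def seq_over_def by blast
  define y where "y = (-c) mod p"
  define z where "z = (h - y) mod p"
  have yg: "y \<in> grp p" "z \<in> grp p" unfolding grp_def y_def z_def using assms(3) by auto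
  have hmod: "h mod p = h" using hg unfolding grp_def by simp
  have yz: "(y + z) mod p = h" unfolding z_def by (simp add: mod_add_right_eq hmod)
  have "(y + c) mod p = 0" unfolding y_def by (simp add: mod_add_left_eq)
  then have d1: "p dvd (y + c)" by (simp add: dvd_eq_mod_eq_0)
  have d2: "p dvd (y + z - h)" using yz by (metis mod_eq_dvd_iff hmod)
  have d3: "p dvd (sum_mset V + h)" using Ssum SV by (simp add: add.commute)
  have "min_zero_sum p (S - {#h#} + {#y, z#})"
    unfolding min_zero_sum_def
  proof (intro conjI allI impI)
    show "seq_over p (S - {#h#} + {#y, z#})"
      using mz yg unfolding min_zero_sum_def seq_over_def by (auto dest: in_diffD)
    show "S - {#h#} + {#y, z#} \<noteq> {#}" by simp
    have e: "sum_mset (S - {#h#} + {#y, z#}) = (y + z - h) + (sum_mset V + h)"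
      by (simp add: V_def[symmetric] algebra_simps)
    show "sigma p (S - {#h#} + {#y, z#}) = 0" unfolding sigma_def e
      using dvd_add[OF d2 d3] by (rule dvd_imp_mod_0)
  next
    fix U assume Ua: "U \<subseteq># S - {#h#} + {#y, z#} \<and> 1 \<le> size U \<and> size U < size (S - {#h#} + {#y, z#})"
    show "sigma p U \<noteq> 0"
    proof
      assume s0: "sigma p U = 0"
      then have dU: "p dvd sum_mset U" unfolding sigma_def by (simp add: dvd_eq_mod_eq_0)
      obtain U1 R where UR: "U = U1 + R" "U1 \<subseteq># V" "R \<subseteq># {#y, z#}"
        using msub_split[of U V "{#y,z#}"] Ua V_def by auto
      have VS: "V \<subseteq># S" unfolding V_def by simp
      have szV: "size S = Suc (size V)" using SV by simp
      from msub_two[OF UR(3)] show False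
      proof (elim disjE)
        assume R: "R = {#}"
        then have "U1 \<noteq> {#}" using Ua UR by auto
        moreover have "U1 \<subseteq># S" using UR(2) VS by (rule subset_mset.order_trans)
        ultimately have "U1 = S" using min_sub[OF mz] dU UR R by simp
        moreover have "size U1 \<le> size V" using UR(2) by (rule size_mset_mono)
        ultimately show False using szV by simp
      next
        assume R: "R = {#y#}"
        have "p dvd (sum_mset U1 - c)"
        proof -
          have eq: "sum_mset U1 - c = sum_mset U - (y + c)" using UR R by simp
          show ?thesis unfolding eq by (rule dvd_diff[OF dU d1])
        qed
        then show False using nc UR(2) V_def by blast
      next
        assume R: "R = {#z#}"
        have "V - U1 \<subseteq># S - {#h#}" unfolding V_def[symmetric] by (rule diff_subset_eq_self)
        moreover have "p dvd (sum_mset (V - U1) - c)"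
        proof -
          have eq: "sum_mset (V - U1) - c = (sum_mset V + h) - sum_mset U + (y + z - h) - (y + c)"
            using UR R sum_mset_diff[OF UR(2)] by simp
          show ?thesis using dvd_diff[OF dvd_add[OF dvd_diff[OF d3 dU] d2] d1] by (simp only: eq)
        qed
        ultimately show False using nc by blast
      next
        assume R: "R = {#y, z#}"
        have "add_mset h U1 \<subseteq># S" using UR(2) SV by simp
        moreover have "p dvd sum_mset (add_mset h U1)"
        proof -
          have eq: "sum_mset (add_mset h U1) = sum_mset U - (y + z - h)" using UR R by simp
          show ?thesis unfolding eq by (rule dvd_diff[OF dU d2])
        qed
        ultimately have "add_mset h U1 = S" using min_sub[OF mz, of "add_mset h U1"] by simp
        then have "U1 = V" using SV by simp
        then show False using Ua UR R V_def by simp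
      qed
    qed
  qed
  then show False using assms(1) assms(2) yg yz unfolding unsplittable_def by blast
qed
lemma inj_core:
  fixes p x :: int and k m a b a' b' :: nat
  assumes Z0: "\<And>a b. a \<le> k \<Longrightarrow> b \<le> 2 \<Longrightarrow> p dvd (int a + int b * x) \<Longrightarrow> 0 < a + b \<Longrightarrow> a = k \<and> b = 2"
    and xk1: "int k < x" and xk2: "x \<le> p - int k - 1"
    and yc: "\<And>e. 1 \<le> e \<Longrightarrow> e \<le> int m \<Longrightarrow> \<not> p dvd (2*x - e)"
    and Da: "(b = 0 \<and> 1 \<le> a \<and> a \<le> k) \<or> (b = 1 \<and> a \<le> k) \<or> (b = 2 \<and> k - m \<le> a \<and> a \<le> k)"
    and Db: "(b' = 0 \<and> 1 \<le> a' \<and> a' \<le> k) \<or> (b' = 1 \<and> a' \<le> k) \<or> (b' = 2 \<and> k - m \<le> a' \<and> a' \<le> k)"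
    and d: "p dvd ((int a - int a') + (int b - int b') * x)"
  shows "a = a' \<and> b = b'"
proof -
  have pk: "2 * int k + 1 < p" using xk1 xk2 by linarith
  have H0: "e = 0" if "- int k \<le> e" "e \<le> int k" "p dvd e" for e
  proof (rule ccontr)
    assume ne: "e \<noteq> 0"
    show False
    proof (cases "e > 0")
      case True then show False using zdvd_not_zless[of e p] that pk by linarith
    next
      case False
      then have "0 < - e" using ne by linarith
      moreover have "p dvd - e" using that(3) by simp
      ultimately show False using zdvd_not_zless[of "-e" p] that pk by linarith
    qed
  qed
  have H1: False if "- int k \<le> e" "e \<le> int k" "p dvd (e + x)" for e
  proof (cases "e \<ge> 0")
    case True
    have "int (nat e) + int 1 * x = e + x" using True by simp
    moreover have "nat e \<le> k" using that(2) by (simp add: nat_le_iff)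
    ultimately have "nat e = k \<and> (1::nat) = 2" using Z0[of "nat e" 1] that True by simp
    then show False by simp
  next
    case False
    have "0 < e + x" "e + x < p" using False that(1) xk1 xk2 by linarith+
    then show False using zdvd_not_zless[of "e + x" p] that(3) by simp
  qed
  have H2: "e = int k" if "0 \<le> e" "e \<le> int k" "p dvd (e + 2 * x)" for e
  proof -
    have "int (nat e) + int 2 * x = e + 2 * x" using that by simp
    then have "nat e = k \<and> (2::nat) = 2" using Z0[of "nat e" 2] that by simp
    then show ?thesis using that by simp
  qed
  have ak: "a \<le> k" "a' \<le> k" using Da Db by auto
  consider "b = b'" | "b = 1 \<and> b' = 0 \<or> b = 2 \<and> b' = 1" | "b = 0 \<and> b' = 1 \<or> b = 1 \<and> b' = 2"
    | "b = 2 \<and> b' = 0" | "b = 0 \<and> b' = 2" using Da Db by auto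
  then show ?thesis
  proof cases
    case 1
    then have "p dvd (int a - int a')" using d by simp
    then have "int a - int a' = 0" using H0[of "int a - int a'"] ak by linarith
    then show ?thesis using 1 by simp
  next
    case 2
    then have "p dvd ((int a - int a') + x)" using d by auto
    moreover have "- int k \<le> int a - int a'" "int a - int a' \<le> int k" using ak by linarith+
    ultimately show ?thesis using H1 by blast
  next
    case 3
    then have "p dvd (- ((int a' - int a) + x))" using d by (auto simp: algebra_simps)
    then have "p dvd ((int a' - int a) + x)" by (simp only: dvd_minus_iff)
    moreover have "- int k \<le> int a' - int a" "int a' - int a \<le> int k" using ak by linarith+
    ultimately show ?thesis using H1 by blast
  next
    case 4
    then have dd: "p dvd ((int a - int a') + 2 * x)" using d by auto
    have "1 \<le> a'" using 4 Db by auto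
    show ?thesis
    proof (cases "a' \<le> a")
      case True
      then have "int a - int a' = int k" using H2[of "int a - int a'"] dd ak by linarith
      then show ?thesis using \<open>1 \<le> a'\<close> ak by linarith
    next
      case False
      have "k \<le> a + m" using 4 Da by auto
      then have "int a' - int a \<le> int m" using ak by linarith
      moreover have "1 \<le> int a' - int a" using False by linarith
      ultimately have nd: "\<not> p dvd (2 * x - (int a' - int a))" using yc by blast
      have eq: "2 * x - (int a' - int a) = (int a - int a') + 2 * x" by simp
      have "p dvd (2 * x - (int a' - int a))" unfolding eq by (rule dd)
      then show ?thesis using nd by blast
    qed
  next
    case 5
    then have "p dvd (- ((int a' - int a) + 2 * x))" using d by (auto simp: algebra_simps)
    then have dd: "p dvd ((int a' - int a) + 2 * x)" by (simp only: dvd_minus_iff)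
    have "1 \<le> a" using 5 Da by auto
    show ?thesis
    proof (cases "a \<le> a'")
      case True
      then have "int a' - int a = int k" using H2[of "int a' - int a"] dd ak by linarith
      then show ?thesis using \<open>1 \<le> a\<close> ak by linarith
    next
      case False
      have "k \<le> a' + m" using 5 Db by auto
      then have "int a - int a' \<le> int m" using ak by linarith
      moreover have "1 \<le> int a - int a'" using False by linarith
      ultimately have nd: "\<not> p dvd (2 * x - (int a - int a'))" using yc by blast
      have eq: "2 * x - (int a - int a') = (int a' - int a) + 2 * x" by simp
      have "p dvd (2 * x - (int a - int a'))" unfolding eq by (rule dd)
      then show ?thesis using nd by blast
    qed
  qed
qed
lemma card_D:
  assumes "m \<le> k"
  shows "card {(a::nat,b::nat). (b = 0 \<and> 1 \<le> a \<and> a \<le> k) \<or> (b = 1 \<and> a \<le> k) \<or> (b = 2 \<and> k - m \<le> a \<and> a \<le> k)} = 2*k + 2 + m"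
proof -
  have eq: "{(a::nat,b::nat). (b = 0 \<and> 1 \<le> a \<and> a \<le> k) \<or> (b = 1 \<and> a \<le> k) \<or> (b = 2 \<and> k - m \<le> a \<and> a \<le> k)}
     = (\<lambda>a. (a,0::nat)) ` {1..k} \<union> ((\<lambda>a. (a,1)) ` {0..k} \<union> (\<lambda>a. (a,2)) ` {k-m..k})"
    by auto
  have c1: "card ((\<lambda>a. (a,0::nat)) ` {1..k}) = k" by (simp add: card_image inj_on_def)
  have c2: "card ((\<lambda>a. (a,1::nat)) ` {0..k}) = k + 1" by (simp add: card_image inj_on_def)
  have c3: "card ((\<lambda>a. (a,2::nat)) ` {k-m..k}) = m + 1" using assms by (simp add: card_image inj_on_def)
  have "card ((\<lambda>a. (a,1)) ` {0..k} \<union> (\<lambda>a. (a,2::nat)) ` {k-m..k}) = k + 1 + (m + 1)"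
    using c2 c3 by (subst card_Un_disjoint) auto
  then have "card ((\<lambda>a. (a,0::nat)) ` {1..k} \<union> ((\<lambda>a. (a,1)) ` {0..k} \<union> (\<lambda>a. (a,2::nat)) ` {k-m..k})) = k + (k + 1 + (m + 1))"
    using c1 by (subst card_Un_disjoint) auto
  then show ?thesis unfolding eq by simp
qed
theorem lemma2p8:
  fixes p g x :: int and k :: nat and S T :: "int multiset"
  assumes "prime p"
    and "unsplittable p S"
    and "g \<in> grp p"
    and "2 \<le> x" and "x \<le> p - 1"
    and "3 \<le> k"
    and "T = replicate_mset k g + replicate_mset 2 ((x * g) mod p)"
    and "T \<subseteq># S"
  shows "card (Sigma_set p T) \<ge> 2 * size T \<and>
         (T \<noteq> replicate_mset k g + replicate_mset 2 ((((p + 3) div 2) * g) mod p)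
           \<longrightarrow> card (Sigma_set p T) \<ge> 2 * size T + 1)"
proof -
  have p3: "3 \<le> p" using assms(4,5) by linarith
  have mz: "min_zero_sum p S" using assms(2) unfolding unsplittable_def by blast
  have g0: "0 \<le> g" "g < p" using assms(3) unfolding grp_def by auto
  define X where "X = (x * g) mod p"
  have TX: "T = replicate_mset k g + replicate_mset 2 X" using assms(7) X_def by simp
  define W where "W = S - T"
  have SW: "S = T + W" using assms(8) W_def by (simp add: subset_mset.add_diff_inverse)
  have XT: "X \<in># T" by (simp add: TX)
  have gT: "g \<in># T" using assms(6) by (simp add: TX)
  have XS: "X \<in># S" using XT SW by simp
  have gS: "g \<in># S" using gT SW by simp
  have sizeT: "size T = k + 2" by (simp add: TX)
  have "(X - x * g) mod p = 0" by (simp add: X_def mod_diff_left_eq)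
  then have dXg: "p dvd (X - x * g)" by (simp add: dvd_eq_mod_eq_0)
  have Z: "a = k \<and> b = 2" if "a \<le> k" "b \<le> 2" "U2 \<subseteq># W"
      "p dvd (int a * g + int b * X + sum_mset U2)" "0 < a + b" for a b U2
  proof -
    define U where "U = replicate_mset a g + replicate_mset b X + U2"
    have "replicate_mset a g \<subseteq># replicate_mset k g" using that(1)
      by (simp add: subseteq_mset_def)
    moreover have "replicate_mset b X \<subseteq># replicate_mset 2 X" using that(2)
      by (simp add: subseteq_mset_def)
    ultimately have "replicate_mset a g + replicate_mset b X \<subseteq># T" unfolding TX
      by (rule subset_mset.add_mono)
    then have US: "U \<subseteq># S" unfolding U_def SW using that(3) by (rule subset_mset.add_mono)
    have "U \<noteq> {#}" using that(5) U_def by (cases a) auto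
    moreover have "p dvd sum_mset U" using that(4) by (simp add: U_def)
    ultimately have "U = S" using min_sub[OF mz US] by simp
    then have "size U = size S" by simp
    moreover have "size U = a + b + size U2" by (simp add: U_def)
    moreover have "size S = k + 2 + size W" by (simp add: SW sizeT)
    moreover have "size U2 \<le> size W" using that(3) by (rule size_mset_mono)
    ultimately show ?thesis using that(1,2) by linarith
  qed
  have gnz: "g \<noteq> 0"
  proof
    assume "g = 0"
    then have "p dvd (int 1 * g + int 0 * X + sum_mset {#})" by simp
    then have "1 = k" using Z[of 1 0 "{#}"] assms(6) by simp
    then show False using assms(6) by simp
  qed
  have ng: "\<not> p dvd g" using zdvd_not_zless[of g p] g0 gnz by simp
  have Z0: "a = k \<and> b = 2" if "a \<le> k" "b \<le> 2" "p dvd (int a + int b * x)" "0 < a + b" for a b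
  proof -
    have "p dvd ((int a + int b * x) * g + int b * (X - x * g))"
      by (rule dvd_add[OF dvd_mult2[OF that(3), of g] dvd_mult[OF dXg, of "int b"]])
    moreover have "(int a + int b * x) * g + int b * (X - x * g) = int a * g + int b * X + sum_mset {#}"
      by (simp add: algebra_simps)
    ultimately show ?thesis using Z[of a b "{#}"] that by simp
  qed
  have Xg: "X \<noteq> g"
  proof
    assume "X = g"
    then have "p dvd ((1 - x) * g)" using dXg by (simp add: algebra_simps)
    then have "p dvd (1 - x)" using ng assms(1) by (simp add: prime_dvd_mult_iff)
    then have "p dvd (x - 1)" by (simp add: dvd_diff_commute)
    then show False using zdvd_not_zless[of "x - 1" p] assms(4,5) by simp
  qed
  have TmX: "T - {#X#} = replicate_mset k g + replicate_mset 1 X"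
    by (simp add: TX numeral_2_eq_2)
  have Tmg: "T - {#g#} = replicate_mset (k - 1) g + replicate_mset 2 X"
  proof -
    have "replicate_mset k g = add_mset g (replicate_mset (k - 1) g)" using assms(6) by (cases k) auto
    then show ?thesis by (simp add: TX)
  qed
  have SmX: "S - {#X#} = (T - {#X#}) + W"
    using diff_union_single_conv[OF XT, of W] SW by (simp add: add.commute)
  have Smg: "S - {#g#} = (T - {#g#}) + W"
    using diff_union_single_conv[OF gT, of W] SW by (simp add: add.commute)
  have p0: "p > 0" using p3 by simp
  have xk1: "int k < x"
  proof (rule ccontr)
    assume "\<not> int k < x"
    then have xk: "x \<le> int k" by simp
    obtain U where U: "U \<subseteq># S - {#X#}" "p dvd (sum_mset U - (- g))"
      using cov[OF assms(2) XS p0, of "-g"] by blast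
    obtain U1 U2 where UU: "U = U1 + U2" "U1 \<subseteq># replicate_mset k g + replicate_mset 1 X" "U2 \<subseteq># W"
      using msub_split[of U "T - {#X#}" W] U(1) SmX TmX by auto
    define a where "a = count U1 g"
    define b where "b = count U1 X"
    have U1: "U1 = replicate_mset a g + replicate_mset b X" "a \<le> k" "b \<le> 1"
      using msub_rep2[OF UU(2) Xg[symmetric]] a_def b_def by auto
    have dv: "p dvd (int a * g + int b * X + sum_mset U2 + g)"
      using U(2) by (simp add: UU U1 algebra_simps)
    show False
    proof (cases "a < k")
      case True
      have eq: "int (a + 1) * g + int b * X + sum_mset U2 = int a * g + int b * X + sum_mset U2 + g"
        by (simp add: algebra_simps)
      have d': "p dvd (int (a + 1) * g + int b * X + sum_mset U2)" unfolding eq by (rule dv)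
      have "a + 1 = k \<and> b = 2" using Z[OF _ _ UU(3) d'] True U1 by simp
      then show False using U1 by simp
    next
      case False
      then have ak: "a = k" using U1 by simp
      define a2 where "a2 = nat (int k + 1 - x)"
      have a2i: "int a2 = int k + 1 - x" using xk unfolding a2_def by simp
      have eq: "int a2 * g + int (b + 1) * X + sum_mset U2 = (int a * g + int b * X + sum_mset U2 + g) + (X - x * g)"
        by (simp add: ak a2i algebra_simps)
      have "p dvd (int a2 * g + int (b + 1) * X + sum_mset U2)" unfolding eq by (rule dvd_add[OF dv dXg])
      moreover have "a2 \<le> k" using a2i assms(4) by linarith
      ultimately have "a2 = k" using Z[of a2 "b + 1" U2] U1 UU by simp
      then show False using a2i assms(4) by linarith
    qed
  qed
  have xk2: "x \<le> p - int k - 1"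
  proof (rule ccontr)
    assume "\<not> x \<le> p - int k - 1"
    then have "p - x \<le> int k" by simp
    then have "nat (p - x) \<le> k" by (simp add: nat_le_iff)
    moreover have "p dvd (int (nat (p - x)) + int 1 * x)" using assms(5) by simp
    ultimately have "(1::nat) = 2" using Z0[of "nat (p - x)" 1] by simp
    then show False by simp
  qed
  have y1: "\<not> p dvd (2 * x - 1)"
  proof
    assume d21: "p dvd (2 * x - 1)"
    obtain U where U: "U \<subseteq># S - {#g#}" "p dvd (sum_mset U - (- X))"
      using cov[OF assms(2) gS p0, of "-X"] by blast
    obtain U1 U2 where UU: "U = U1 + U2" "U1 \<subseteq># replicate_mset (k - 1) g + replicate_mset 2 X" "U2 \<subseteq># W"
      using msub_split[of U "T - {#g#}" W] U(1) Smg Tmg by auto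
    define a where "a = count U1 g"
    define b where "b = count U1 X"
    have U1: "U1 = replicate_mset a g + replicate_mset b X" "a \<le> k - 1" "b \<le> 2"
      using msub_rep2[OF UU(2) Xg[symmetric]] a_def b_def by auto
    have dv: "p dvd (int a * g + int b * X + sum_mset U2 + X)"
      using U(2) by (simp add: UU U1 algebra_simps)
    show False
    proof (cases "b \<le> 1")
      case True
      have eq: "int a * g + int (b + 1) * X + sum_mset U2 = int a * g + int b * X + sum_mset U2 + X"
        by (simp add: algebra_simps)
      have d': "p dvd (int a * g + int (b + 1) * X + sum_mset U2)" unfolding eq by (rule dv)
      have "a \<le> k" using U1 by simp
      then have "a = k \<and> b + 1 = 2" using Z[OF _ _ UU(3) d'] True by simp
      then show False using U1 assms(6) by simp
    next
      case False
      then have b2: "b = 2" using U1 by simp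
      have eq: "int (a + 1) * g + int 1 * X + sum_mset U2
          = (int a * g + int b * X + sum_mset U2 + X) - 2 * (X - x * g) - (2 * x - 1) * g"
        using b2 by (simp add: algebra_simps)
      have "p dvd (int (a + 1) * g + int 1 * X + sum_mset U2)" unfolding eq
        by (rule dvd_diff[OF dvd_diff[OF dv dvd_mult[OF dXg, of 2]] dvd_mult2[OF d21, of g]])
      moreover have "a + 1 \<le> k" using U1 assms(6) by linarith
      ultimately have "a + 1 = k \<and> (1::nat) = 2" using Z[of "a + 1" 1 U2] UU by simp
      then show False by simp
    qed
  qed
  have y2: "\<not> p dvd (2 * x - 2)"
  proof
    assume "p dvd (2 * x - 2)"
    moreover have "2 * x - 2 = 2 * (x - 1)" by simp
    ultimately have "p dvd (2 * (x - 1))" by (simp only:)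
    then have "p dvd 2 \<or> p dvd (x - 1)" using prime_dvd_mult_iff[OF assms(1)] by blast
    then show False using zdvd_not_zless[of "x - 1" p] zdvd_not_zless[of 2 p] assms(4,5) p3 by auto
  qed
  define m :: nat where "m = (if p dvd (2 * x - 3) then 2 else 3)"
  have yc: "\<not> p dvd (2 * x - e)" if "1 \<le> e" "e \<le> int m" for e
  proof -
    have "e = 1 \<or> e = 2 \<or> e = 3" using that m_def by (auto split: if_splits)
    moreover have "e = 3 \<Longrightarrow> \<not> p dvd (2 * x - 3)" using that m_def by (auto split: if_splits)
    ultimately show ?thesis using y1 y2 by auto
  qed
  have mk: "m \<le> k" using m_def assms(6) by simp
  define D where "D = {(a::nat,b::nat). (b = 0 \<and> 1 \<le> a \<and> a \<le> k) \<or> (b = 1 \<and> a \<le> k) \<or> (b = 2 \<and> k - m \<le> a \<and> a \<le> k)}"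
  define f where "f = (\<lambda>(a::nat,b::nat). sigma p (replicate_mset a g + replicate_mset b X))"
  have cD: "card D = 2 * k + 2 + m" unfolding D_def using card_D[OF mk] .
  have fD: "f ` D \<subseteq> Sigma_set p T"
  proof
    fix s assume "s \<in> f ` D"
    then obtain a b where ab: "(a,b) \<in> D" "s = f (a,b)" by auto
    have le: "a \<le> k" "b \<le> 2" "0 < a + b" using ab(1) unfolding D_def by auto
    have "replicate_mset a g \<subseteq># replicate_mset k g" using le(1) by (simp add: subseteq_mset_def)
    moreover have "replicate_mset b X \<subseteq># replicate_mset 2 X" using le(2) by (simp add: subseteq_mset_def)
    ultimately have "replicate_mset a g + replicate_mset b X \<subseteq># T" unfolding TX
      by (rule subset_mset.add_mono)
    moreover have "replicate_mset a g + replicate_mset b X \<noteq> {#}" using le(3) by (cases a) auto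
    ultimately show "s \<in> Sigma_set p T" unfolding Sigma_set_def using ab(2) f_def by auto
  qed
  have fin: "finite (Sigma_set p T)"
  proof (rule finite_subset)
    show "Sigma_set p T \<subseteq> {0..<p}" unfolding Sigma_set_def sigma_def using p0 by auto
  qed simp
  have inj: "inj_on f D"
  proof (rule inj_onI)
    fix u v assume uv: "u \<in> D" "v \<in> D" "f u = f v"
    obtain a b where u: "u = (a,b)" by (cases u)
    obtain a' b' where v: "v = (a',b')" by (cases v)
    have "(int a * g + int b * X) mod p = (int a' * g + int b' * X) mod p"
      using uv(3) unfolding u v f_def sigma_def by simp
    then have d1: "p dvd ((int a * g + int b * X) - (int a' * g + int b' * X))"
      by (simp add: mod_eq_dvd_iff)
    have "((int a - int a') + (int b - int b') * x) * g
        = ((int a * g + int b * X) - (int a' * g + int b' * X)) - (int b - int b') * (X - x * g)"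
      by (simp add: algebra_simps)
    moreover have "p dvd (((int a * g + int b * X) - (int a' * g + int b' * X)) - (int b - int b') * (X - x * g))"
      by (rule dvd_diff[OF d1 dvd_mult[OF dXg, of "int b - int b'"]])
    ultimately have "p dvd (((int a - int a') + (int b - int b') * x) * g)" by simp
    then have dd: "p dvd ((int a - int a') + (int b - int b') * x)"
      using ng assms(1) by (simp add: prime_dvd_mult_iff)
    have Da: "(b = 0 \<and> 1 \<le> a \<and> a \<le> k) \<or> (b = 1 \<and> a \<le> k) \<or> (b = 2 \<and> k - m \<le> a \<and> a \<le> k)"
      using uv(1) u D_def by simp
    have Db: "(b' = 0 \<and> 1 \<le> a' \<and> a' \<le> k) \<or> (b' = 1 \<and> a' \<le> k) \<or> (b' = 2 \<and> k - m \<le> a' \<and> a' \<le> k)"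
      using uv(2) v D_def by simp
    have "a = a' \<and> b = b'"
      by (rule inj_core[where k=k and p=p and x=x and m=m, OF Z0 xk1 xk2 yc Da Db dd])
    then show "u = v" using u v by simp
  qed
  have cardge: "card (Sigma_set p T) \<ge> 2 * k + 2 + m"
  proof -
    have "card (f ` D) = card D" using inj by (rule card_image)
    moreover have "card (f ` D) \<le> card (Sigma_set p T)" using fD fin by (rule card_mono[rotated])
    ultimately show ?thesis using cD by simp
  qed
  show ?thesis
  proof (cases "p dvd (2 * x - 3)")
    case False
    then have "m = 3" using m_def by simp
    then show ?thesis using cardge sizeT by simp
  next
    case True
    then have m2: "m = 2" using m_def by simp
    define q where "q = (p + 3) div 2"
    have "odd p" using prime_odd_int[OF assms(1)] p3 by simp
    then have q2: "2 * q = p + 3" unfolding q_def by (metis odd_two_times_div_two_nat even_add odd_numeral dvd_mult_div_cancel)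
    have "p dvd ((2 * x - 3) - p)" by (rule dvd_diff[OF True dvd_refl])
    moreover have "(2 * x - 3) - p = 2 * (x - q)" using q2 by (simp add: algebra_simps)
    ultimately have "p dvd (2 * (x - q))" by simp
    then have "p dvd 2 \<or> p dvd (x - q)" using prime_dvd_mult_iff[OF assms(1)] by blast
    then have "p dvd (x - q)" using zdvd_not_zless[of 2 p] p3 by auto
    then have "p dvd (x * g - q * g)" by (metis dvd_mult2 left_diff_distrib)
    then have "(x * g) mod p = (q * g) mod p" by (simp add: mod_eq_dvd_iff)
    then have "T = replicate_mset k g + replicate_mset 2 ((((p + 3) div 2) * g) mod p)"
      using assms(7) q_def by simp
    then show ?thesis using cardge sizeT m2 by simp
  qed
qed
end
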